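(* For any positive integers $m > s$, $f(m,s) \ge 1/3$.
   Context: The muffin problem with $m$ muffins and $s$ students (positive integers) asks to cut each of $m$ muffins of size $1$ into finitely many pieces of positive size and to assign every piece to one of $s$ students so that each student receives pieces of total size $m/s$. $f(m,s)$ denotes the maximum, over all such divisions and assignments, of the size of the smallest piece. *)

theory Defs
  imports Complex_Main
begin

definition muffin_proc :: "nat \<Rightarrow> nat \<Rightarrow> (nat \<times> nat \<times> real) list \<Rightarrow> bool" where
  "muffin_proc m s ps \<longleftrightarrow>
     (\<forall>(i, j, x) \<in> set ps. i < m \<and> j < s \<and> x > 0) \<and>
     (\<forall>i<m. (\<Sum>(i', j, x) \<leftarrow> ps. if i' = i then x else 0) = 1) \<and>
     (\<forall>j<s. (\<Sum>(i, j', x) \<leftarrow> ps. if j' = j then x else 0) = real m / real s)"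

definition min_piece :: "(nat \<times> nat \<times> real) list \<Rightarrow> real" where
  "min_piece ps = Min ((\<lambda>(i, j, x). x) ` set ps)"

definition muffin_f :: "nat \<Rightarrow> nat \<Rightarrow> real" where
  "muffin_f m s = Sup {min_piece ps | ps. muffin_proc m s ps}"

end

theory Submission
  imports Defs
begin

lemma sl_concat_map:
  "sum_list (map f (concat (map g xs))) = sum_list (map (\<lambda>x. sum_list (map f (g x))) xs)"
  by (induction xs) auto

lemma sl_upt: "sum_list (map f [a..<b]) = (\<Sum>i\<in>{a..<b}. f i)"
  by (simp add: sum_set_upt_conv_sum_list_nat[symmetric])

definition yv :: "nat \<Rightarrow> nat \<Rightarrow> nat \<Rightarrow> real" where
  "yv s k j = (real s + real (3*k*j mod s)) / (3 * real s)"

definition Qv :: "nat \<Rightarrow> nat \<Rightarrow> nat \<Rightarrow> nat" where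
  "Qv s k j = 3*k*j div s"

definition chain :: "nat \<Rightarrow> nat \<Rightarrow> (nat \<times> nat \<times> real) list" where
  "chain s k = concat (map (\<lambda>j. [(j, j, 1 - yv s k j), (Suc j mod s, j, yv s k (Suc j mod s))]) [0..<s])"

definition thirds :: "nat \<Rightarrow> nat \<Rightarrow> (nat \<times> nat \<times> real) list" where
  "thirds s k = concat (map (\<lambda>j. map (\<lambda>p. (s + p div 3, j, 1/3::real)) [Qv s k j..<Qv s k (Suc j)]) [0..<s])"

lemma yv_bounds:
  assumes "0 < s" shows "1/3 \<le> yv s k j \<and> yv s k j < 2/3"
proof -
  have a: "3*k*j mod s < s" using assms by simp
  have "real (3*k*j mod s) < real s" using a by linarith
  then show ?thesis using assms unfolding yv_def by (simp add: field_simps)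
qed

lemma Qv_mono: "i \<le> j \<Longrightarrow> Qv s k i \<le> Qv s k j"
  unfolding Qv_def by (simp add: div_le_mono)

lemma Qv_s: "0 < s \<Longrightarrow> Qv s k s = 3*k"
  unfolding Qv_def by simp

lemma yv_mod: "yv s k (j mod s) = yv s k j"
  unfolding yv_def by (metis mod_mult_right_eq)

lemma student_eq:
  assumes "0 < s"
  shows "1 - yv s k j + yv s k (Suc j mod s) + real (Qv s k (Suc j) - Qv s k j) / 3
         = real (s + k) / real s"
proof -
  have e1: "3*k*j = s * Qv s k j + 3*k*j mod s" unfolding Qv_def by simp
  have e2: "3*k*Suc j = s * Qv s k (Suc j) + 3*k*Suc j mod s" unfolding Qv_def by simp
  have le: "Qv s k j \<le> Qv s k (Suc j)" by (rule Qv_mono) simp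
  have r1: "3*real k*real j = real s * real (Qv s k j) + real (3*k*j mod s)"
    using arg_cong[OF e1, of real] by simp
  have r2: "3*real k*(real j + 1) = real s * real (Qv s k (Suc j)) + real (3*k*Suc j mod s)"
    using arg_cong[OF e2, of real] by (simp add: algebra_simps)
  have key: "real (3*k*Suc j mod s) - real (3*k*j mod s) + real s * (real (Qv s k (Suc j)) - real (Qv s k j)) = 3 * real k"
    using r1 r2 by (simp add: algebra_simps)
  have gen: "\<And>A B Q Q' S K :: real. S > 0 \<Longrightarrow> B - A + S * (Q' - Q) = 3 * K \<Longrightarrow>
     1 - (S + A) / (3 * S) + (S + B) / (3 * S) + (Q' - Q) / 3 = (S + K) / S"
  proof -
    fix A B Q Q' S K :: real
    assume S: "S > 0" and h: "B - A + S * (Q' - Q) = 3 * K"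
    have hB: "B = A + 3 * K - S * (Q' - Q)" using h by simp
    show "1 - (S + A) / (3 * S) + (S + B) / (3 * S) + (Q' - Q) / 3 = (S + K) / S"
      unfolding hB using S by (simp add: field_simps)
  qed
  have "yv s k (Suc j mod s) = yv s k (Suc j)" by (rule yv_mod)
  moreover have "real (Qv s k (Suc j) - Qv s k j) = real (Qv s k (Suc j)) - real (Qv s k j)"
    using le by simp
  ultimately show ?thesis using gen[OF _ key] assms unfolding yv_def by simp
qed

lemma chain_sum:
  "sum_list (map F (chain s k)) =
   (\<Sum>j\<in>{0..<s}. F (j, j, 1 - yv s k j) + F (Suc j mod s, j, yv s k (Suc j mod s)))"
  unfolding chain_def sl_concat_map sl_upt by simp

lemma thirds_sum:
  "sum_list (map F (thirds s k)) =
   (\<Sum>j\<in>{0..<s}. \<Sum>p\<in>{Qv s k j..<Qv s k (Suc j)}. F (s + p div 3, j, 1/3))"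
  unfolding thirds_def sl_concat_map sl_upt by (simp add: sl_upt)

lemma rot:
  assumes "0 < s"
  shows "(\<Sum>j\<in>{0..<s}. G (Suc j mod s)) = (\<Sum>j\<in>{0..<s}. (G j :: real))"
proof -
  obtain n where n: "s = Suc n" using assms gr0_implies_Suc by blast
  have "(\<Sum>j\<in>{0..<Suc n}. G (Suc j mod Suc n)) = (\<Sum>j\<in>{0..<n}. G (Suc j mod Suc n)) + G 0"
    by (simp add: sum.atLeast0_lessThan_Suc)
  also have "(\<Sum>j\<in>{0..<n}. G (Suc j mod Suc n)) = (\<Sum>j\<in>{0..<n}. G (Suc j))"
    by (rule sum.cong) auto
  also have "(\<Sum>j\<in>{0..<n}. G (Suc j)) + G 0 = (\<Sum>j\<in>{0..<Suc n}. G j)"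
    by (simp add: sum.atLeast0_lessThan_Suc_shift del: sum.op_ivl_Suc)
  finally show ?thesis using n by simp
qed

lemma tele:
  "(\<Sum>j\<in>{0..<n}. \<Sum>p\<in>{Qv s k j..<Qv s k (Suc j)}. (f p :: real)) = (\<Sum>p\<in>{Qv s k 0..<Qv s k n}. f p)"
proof (induction n)
  case 0 then show ?case by simp
next
  case (Suc n)
  have a: "Qv s k 0 \<le> Qv s k n" by (rule Qv_mono) simp
  have b: "Qv s k n \<le> Qv s k (Suc n)" by (rule Qv_mono) simp
  show ?case using Suc sum.atLeastLessThan_concat[OF a b, of f]
    by (simp add: sum.atLeast0_lessThan_Suc)
qed

lemma thirds_count:
  fixes c k :: nat
  assumes "c < k"
  shows "(\<Sum>p\<in>{0..<3*k}. (if p div 3 = c then 1/3 else 0 :: real)) = 1"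
proof -
  have "(\<Sum>p\<in>{0..<3*k}. (if p div 3 = c then 1/3 else 0 :: real)) = (\<Sum>p\<in>{p\<in>{0..<3*k}. p div 3 = c}. 1/3)"
    by (rule sum.inter_filter[symmetric]) simp
  also have "{p\<in>{0..<3*k}. p div 3 = c} = {3*c..<3*c+3}"
    using assms by auto
  finally show ?thesis by simp
qed

lemma proc_ok:
  assumes s0: "0 < s"
  shows "muffin_proc (s + k) s (chain s k @ thirds s k)"
proof -
  have yb: "\<And>j. 1/3 \<le> yv s k j \<and> yv s k j < 2/3" using yv_bounds[OF s0] by blast
  have QS: "Qv s k s = 3*k" using Qv_s[OF s0] .
  have pieces: "\<forall>(i, j, x) \<in> set (chain s k @ thirds s k). i < s + k \<and> j < s \<and> x > 0"
  proof
    fix t assume "t \<in> set (chain s k @ thirds s k)"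
    then consider (c) j where "j < s" "t = (j, j, 1 - yv s k j) \<or> t = (Suc j mod s, j, yv s k (Suc j mod s))"
      | (t) j p where "j < s" "Qv s k j \<le> p" "p < Qv s k (Suc j)" "t = (s + p div 3, j, 1/3)"
      unfolding chain_def thirds_def by auto
    then show "case t of (i, j, x) \<Rightarrow> i < s + k \<and> j < s \<and> x > 0"
    proof cases
      case c
      have "Suc j mod s < s + k" using s0 by (meson mod_less_divisor trans_less_add1)
      then show ?thesis using c yb[of j] yb[of "Suc j mod s"] s0 by auto
    next
      case t
      have "Qv s k (Suc j) \<le> Qv s k s" using t(1) by (intro Qv_mono) simp
      then have "p < 3*k" using t(3) QS by simp
      then show ?thesis using t by auto
    qed
  qed
  have muf: "\<forall>i<s+k. (\<Sum>(i', j, x) \<leftarrow> chain s k @ thirds s k. if i' = i then x else 0) = 1"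
  proof (intro allI impI)
    fix i assume i: "i < s + k"
    let ?F = "\<lambda>(i', j::nat, x::real). if i' = i then x else 0"
    have sp: "(\<Sum>(i', j, x) \<leftarrow> chain s k @ thirds s k. if i' = i then x else 0)
       = sum_list (map ?F (chain s k)) + sum_list (map ?F (thirds s k))" by simp
    show "(\<Sum>(i', j, x) \<leftarrow> chain s k @ thirds s k. if i' = i then x else 0) = 1"
    proof (cases "i < s")
      case True
      have c1: "sum_list (map ?F (chain s k)) = (\<Sum>j\<in>{0..<s}. (if j = i then 1 - yv s k j else 0))
           + (\<Sum>j\<in>{0..<s}. (\<lambda>i'. if i' = i then yv s k i' else 0) (Suc j mod s))"
        unfolding chain_sum by (simp add: sum.distrib)
      also have "\<dots> = (1 - yv s k i) + yv s k i"
        using rot[OF s0, of "\<lambda>i'. if i' = i then yv s k i' else 0"] True by simp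
      finally have c1': "sum_list (map ?F (chain s k)) = 1" by simp
      have "sum_list (map ?F (thirds s k)) = 0"
        unfolding thirds_sum using True by simp
      then show ?thesis using sp c1' by simp
    next
      case False
      have c1: "sum_list (map ?F (chain s k)) = 0"
        unfolding chain_sum using False s0 by (auto intro!: sum.neutral)
      have "sum_list (map ?F (thirds s k)) =
         (\<Sum>j\<in>{0..<s}. \<Sum>p\<in>{Qv s k j..<Qv s k (Suc j)}. (if p div 3 = i - s then 1/3 else 0))"
        unfolding thirds_sum using False by (intro sum.cong refl) auto
      also have "\<dots> = (\<Sum>p\<in>{0..<3*k}. (if p div 3 = i - s then 1/3 else 0))"
        unfolding tele QS by (simp add: Qv_def)
      also have "\<dots> = 1" using False i by (intro thirds_count) simp
      finally show ?thesis using sp c1 by simp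
    qed
  qed
  have stu: "\<forall>j<s. (\<Sum>(i, j', x) \<leftarrow> chain s k @ thirds s k. if j' = j then x else 0) = real (s + k) / real s"
  proof (intro allI impI)
    fix j assume j: "j < s"
    let ?F = "\<lambda>(i, j'::nat, x::real). if j' = j then x else 0"
    have sp: "(\<Sum>(i, j', x) \<leftarrow> chain s k @ thirds s k. if j' = j then x else 0)
       = sum_list (map ?F (chain s k)) + sum_list (map ?F (thirds s k))" by simp
    have c1: "sum_list (map ?F (chain s k)) = 1 - yv s k j + yv s k (Suc j mod s)"
      unfolding chain_sum using j by (simp add: if_distrib cong: if_cong)
    have c2: "sum_list (map ?F (thirds s k)) = real (Qv s k (Suc j) - Qv s k j) / 3"
    proof -
      have "sum_list (map ?F (thirds s k)) = (\<Sum>j'\<in>{0..<s}. (if j' = j then real (Qv s k (Suc j') - Qv s k j') / 3 else 0))"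
        unfolding thirds_sum by (intro sum.cong refl) auto
      also have "\<dots> = real (Qv s k (Suc j) - Qv s k j) / 3" using j by (simp add: sum.delta)
      finally show ?thesis .
    qed
    show "(\<Sum>(i, j', x) \<leftarrow> chain s k @ thirds s k. if j' = j then x else 0) = real (s + k) / real s"
      using sp c1 c2 student_eq[OF s0, of k j] by simp
  qed
  show ?thesis unfolding muffin_proc_def using pieces muf stu by blast
qed

lemma pieces_ge:
  assumes s0: "0 < s"
  shows "\<forall>(i, j, x) \<in> set (chain s k @ thirds s k). 1/3 \<le> x"
proof
  have yb: "\<And>j. 1/3 \<le> yv s k j \<and> yv s k j < 2/3" using yv_bounds[OF s0] by blast
  fix t assume "t \<in> set (chain s k @ thirds s k)"
  then consider (c) j where "t = (j, j, 1 - yv s k j) \<or> t = (Suc j mod s, j, yv s k (Suc j mod s))"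
    | (t) j p where "t = (s + p div 3, j, 1/3)"
    unfolding chain_def thirds_def by auto
  then show "case t of (i, j, x) \<Rightarrow> 1/3 \<le> x"
  proof cases
    case c then show ?thesis using yb[of j] yb[of "Suc j mod s"] by auto
  next
    case t then show ?thesis by simp
  qed
qed

lemma min_bound:
  assumes "muffin_proc m s ps" and "0 < m"
  shows "min_piece ps \<le> 1"
proof -
  let ?f = "\<lambda>(i', j::nat, x::real). if i' = (0::nat) then x else 0"
  have pos: "\<forall>(i, j, x) \<in> set ps. x > 0" using assms(1) unfolding muffin_proc_def by blast
  have s1: "sum_list (map ?f ps) = 1" using assms unfolding muffin_proc_def by blast
  have "\<exists>e\<in>set ps. fst e = 0"
  proof (rule ccontr)
    assume "\<not> ?thesis"
    then have "map ?f ps = map (\<lambda>_. 0) ps" by (intro map_cong) auto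
    then have "sum_list (map ?f ps) = sum_list (map (\<lambda>_. 0::real) ps)" by (simp only:)
    also have "\<dots> = 0" by (induction ps) auto
    finally have "sum_list (map ?f ps) = 0" .
    then show False using s1 by simp
  qed
  then obtain j x where e: "(0, j, x) \<in> set ps" by auto
  then obtain xs ys where sp: "ps = xs @ (0, j, x) # ys" by (meson split_list)
  have nn: "\<And>zs. set zs \<subseteq> set ps \<Longrightarrow> 0 \<le> sum_list (map ?f zs)"
    by (rule sum_list_nonneg) (use pos in fastforce)
  have "sum_list (map ?f ps) = sum_list (map ?f xs) + x + sum_list (map ?f ys)" using sp by simp
  moreover have "0 \<le> sum_list (map ?f xs)" "0 \<le> sum_list (map ?f ys)" using nn sp by auto
  ultimately have x1: "x \<le> 1" using s1 by linarith
  have "min_piece ps \<le> x" unfolding min_piece_def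
    by (rule Min_le) (use e in force)+
  then show ?thesis using x1 by simp
qed

theorem lemma8:
  fixes m s :: nat
  assumes "0 < s" and "s < m"
  shows "muffin_f m s \<ge> 1 / 3"
proof -
  define k where "k = m - s"
  have mk: "m = s + k" using assms k_def by simp
  define ps where "ps = chain s k @ thirds s k"
  have proc: "muffin_proc m s ps" unfolding ps_def mk by (rule proc_ok[OF assms(1)])
  have ne: "ps \<noteq> []" unfolding ps_def chain_def using assms(1) by (cases s) auto
  have ge: "\<forall>(i, j, x) \<in> set ps. 1/3 \<le> x" unfolding ps_def by (rule pieces_ge[OF assms(1)])
  have mp: "1/3 \<le> min_piece ps" unfolding min_piece_def
    using ne ge by (subst Min_ge_iff) auto
  have bdd: "bdd_above {min_piece ps | ps. muffin_proc m s ps}"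
    unfolding bdd_above_def using min_bound assms by blast
  have "min_piece ps \<le> muffin_f m s" unfolding muffin_f_def
    by (rule cSup_upper[OF _ bdd]) (use proc in blast)
  then show ?thesis using mp by simp
qed

end
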